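(* Let $\mathfrak{g}$ be a nilpotent Lie algebra over $\mathbb{R}$ of dimension $2p+1$ admitting a contact form, i.e. a linear form $\omega\in\mathfrak{g}^*$ with $\omega\wedge(d\omega)^p\neq 0$, where $d\omega(X,Y)=-\omega([X,Y])$. Then $\mathfrak{g}$ is a one-dimensional central extension of a Lie algebra admitting an affine structure; that is, there is an exact sequence of Lie algebras $0\to V\to\mathfrak{g}\to\mathfrak{h}\to 0$ with $V$ one-dimensional and central in $\mathfrak{g}$, and $\mathfrak{h}$ admits an affine structure.
   Context: An affine structure on a Lie algebra $\mathfrak{h}$ over $\mathbb{R}$ is a bilinear map $\nabla:\mathfrak{h}\times\mathfrak{h}\to\mathfrak{h}$ such that for all $X,Y,Z\in\mathfrak{h}$: (1) $\nabla(X,Y)-\nabla(Y,X)=[X,Y]$, and (2) $\nabla(X,\nabla(Y,Z))-\nabla(Y,\nabla(X,Z))=\nabla([X,Y],Z)$. *)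

theory Defs
  imports "HOL-Analysis.Analysis"
begin

definition lie_algebra :: "('g::real_vector \<Rightarrow> 'g \<Rightarrow> 'g) \<Rightarrow> bool" where
  "lie_algebra br \<longleftrightarrow> bilinear br \<and> (\<forall>x. br x x = 0) \<and>
     (\<forall>x y z. br x (br y z) + br y (br z x) + br z (br x y) = 0)"

fun lcs :: "('g::real_vector \<Rightarrow> 'g \<Rightarrow> 'g) \<Rightarrow> nat \<Rightarrow> 'g set" where
  "lcs br 0 = UNIV"
| "lcs br (Suc k) = span {br x y | x y. y \<in> lcs br k}"

definition nilpotent_lie :: "('g::real_vector \<Rightarrow> 'g \<Rightarrow> 'g) \<Rightarrow> bool" where
  "nilpotent_lie br \<longleftrightarrow> (\<exists>k. lcs br k = {0})"

text \<open>Multilinear forms are represented as functions on lists of vectors.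
  Wedge product of a k-form and an l-form (standard normalisation).\<close>
definition wedge :: "nat \<Rightarrow> nat \<Rightarrow> ('g list \<Rightarrow> real) \<Rightarrow> ('g list \<Rightarrow> real) \<Rightarrow> ('g list \<Rightarrow> real)" where
  "wedge k l \<alpha> \<beta> vs =
     (\<Sum>\<sigma> | \<sigma> permutes {..<k+l}.
        of_int (sign \<sigma>) * \<alpha> (map (\<lambda>i. vs ! \<sigma> i) [0..<k])
                      * \<beta> (map (\<lambda>i. vs ! \<sigma> i) [k..<k+l]))
     / (fact k * fact l)"

fun wedge_pow2 :: "nat \<Rightarrow> ('g list \<Rightarrow> real) \<Rightarrow> ('g list \<Rightarrow> real)" where
  "wedge_pow2 0 \<eta> = (\<lambda>_. 1)"
| "wedge_pow2 (Suc n) \<eta> = wedge 2 (2*n) \<eta> (wedge_pow2 n \<eta>)"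

definition one_form :: "('g \<Rightarrow> real) \<Rightarrow> ('g list \<Rightarrow> real)" where
  "one_form \<omega> vs = \<omega> (vs ! 0)"

definition d_form :: "('g \<Rightarrow> 'g \<Rightarrow> 'g) \<Rightarrow> ('g \<Rightarrow> real) \<Rightarrow> ('g list \<Rightarrow> real)" where
  "d_form br \<omega> vs = - \<omega> (br (vs ! 0) (vs ! 1))"

definition contact_form :: "('g::real_vector \<Rightarrow> 'g \<Rightarrow> 'g) \<Rightarrow> nat \<Rightarrow> ('g \<Rightarrow> real) \<Rightarrow> bool" where
  "contact_form br p \<omega> \<longleftrightarrow> linear \<omega> \<and>
     (\<exists>vs. length vs = 2*p+1 \<and> wedge 1 (2*p) (one_form \<omega>) (wedge_pow2 p (d_form br \<omega>)) vs \<noteq> 0)"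

text \<open>Lie algebra structure on a linear subspace H (used as carrier of the quotient algebra).\<close>
definition lie_algebra_on :: "'g::real_vector set \<Rightarrow> ('g \<Rightarrow> 'g \<Rightarrow> 'g) \<Rightarrow> bool" where
  "lie_algebra_on H br \<longleftrightarrow> subspace H \<and>
     (\<forall>x\<in>H. \<forall>y\<in>H. br x y \<in> H) \<and>
     (\<forall>x\<in>H. \<forall>y\<in>H. \<forall>z\<in>H. \<forall>a b. br (a *\<^sub>R x + b *\<^sub>R y) z = a *\<^sub>R br x z + b *\<^sub>R br y z
                                   \<and> br z (a *\<^sub>R x + b *\<^sub>R y) = a *\<^sub>R br z x + b *\<^sub>R br z y) \<and>
     (\<forall>x\<in>H. br x x = 0) \<and>
     (\<forall>x\<in>H. \<forall>y\<in>H. \<forall>z\<in>H. br x (br y z) + br y (br z x) + br z (br x y) = 0)"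

definition affine_structure_on :: "'g::real_vector set \<Rightarrow> ('g \<Rightarrow> 'g \<Rightarrow> 'g) \<Rightarrow> ('g \<Rightarrow> 'g \<Rightarrow> 'g) \<Rightarrow> bool" where
  "affine_structure_on H br nab \<longleftrightarrow>
     (\<forall>x\<in>H. \<forall>y\<in>H. nab x y \<in> H) \<and>
     (\<forall>x\<in>H. \<forall>y\<in>H. \<forall>z\<in>H. \<forall>a b. nab (a *\<^sub>R x + b *\<^sub>R y) z = a *\<^sub>R nab x z + b *\<^sub>R nab y z
                                   \<and> nab z (a *\<^sub>R x + b *\<^sub>R y) = a *\<^sub>R nab z x + b *\<^sub>R nab z y) \<and>
     (\<forall>x\<in>H. \<forall>y\<in>H. nab x y - nab y x = br x y) \<and>
     (\<forall>x\<in>H. \<forall>y\<in>H. \<forall>z\<in>H. nab x (nab y z) - nab y (nab x z) = nab (br x y) z)"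

end

theory Submission
  imports Defs
begin

context
  fixes br :: "'g::real_vector \<Rightarrow> 'g \<Rightarrow> 'g"
  assumes la: "lie_algebra br"
begin

lemma bl: "bilinear br" using la unfolding lie_algebra_def by blast
lemma linR: "linear (br x)" using bl unfolding bilinear_def by blast
lemma linL: "linear (\<lambda>x. br x y)" using bl unfolding bilinear_def by blast

lemma br_addL: "br (x + y) w = br x w + br y w" using linear_add[OF linL] .
lemma br_addR: "br w (x + y) = br w x + br w y" using linear_add[OF linR] .
lemma br_scaleL: "br (c *\<^sub>R x) w = c *\<^sub>R br x w" using linear_scale[OF linL] .
lemma br_scaleR: "br w (c *\<^sub>R x) = c *\<^sub>R br w x" using linear_scale[OF linR] .
lemma br_diffL: "br (x - y) w = br x w - br y w" using linear_diff[OF linL] .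
lemma br_diffR: "br w (x - y) = br w x - br w y" using linear_diff[OF linR] .
lemma br_negL: "br (- x) w = - br x w" using linear_neg[OF linL] .
lemma br_negR: "br w (- x) = - br w x" using linear_neg[OF linR] .
lemma br_0L: "br 0 w = 0" using linear_0[OF linL] .
lemma br_0R: "br w 0 = 0" using linear_0[OF linR] .
lemma br_sumR: "br w (sum f S) = sum (\<lambda>i. br w (f i)) S" using linear_sum[OF linR] .
lemmas br_simps = br_addL br_addR br_scaleL br_scaleR br_diffL br_diffR br_negL br_negR br_0L br_0R

lemma br_self: "br x x = 0" using la unfolding lie_algebra_def by blast
lemma br_anti: "br y x = - br x y"
proof -
  have "br (x + y) (x + y) = br x x + br x y + (br y x + br y y)" by (simp add: br_simps)
  then have "br x y + br y x = 0" by (simp add: br_self)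
  then show ?thesis by (simp add: eq_neg_iff_add_eq_0 add.commute)
qed
lemma jac: "br x (br y z) + br y (br z x) + br z (br x y) = 0"
  using la unfolding lie_algebra_def by blast

lemma jac2: "br x (br y w) - br y (br x w) = br (br x y) w"
proof -
  have "br x (br y w) + br y (br w x) + br w (br x y) = 0" by (rule jac)
  then show ?thesis using br_anti[of w x] br_anti[of w "br x y"]
    by (simp add: br_simps algebra_simps)
qed

end

definition ml :: "nat \<Rightarrow> ('g::real_vector list \<Rightarrow> real) \<Rightarrow> bool" where
  "ml n f \<longleftrightarrow> (\<forall>vs j a b u w. length vs = n \<longrightarrow> j < n \<longrightarrow>
      f (vs[j := a *\<^sub>R u + b *\<^sub>R w]) = a * f (vs[j:=u]) + b * f (vs[j:=w]))"

definition alt :: "nat \<Rightarrow> ('g list \<Rightarrow> real) \<Rightarrow> bool" where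
  "alt n f \<longleftrightarrow> (\<forall>vs i j. length vs = n \<longrightarrow> i < n \<longrightarrow> j < n \<longrightarrow> i \<noteq> j \<longrightarrow> vs!i = vs!j \<longrightarrow> f vs = 0)"

lemma map_upd_perm:
  assumes "\<sigma> permutes {..<N}" "length vs = N" "j < N" "m + n \<le> N"
  shows "map (\<lambda>i. vs[j:=x] ! \<sigma> i) [m..<m+n] =
    (if m \<le> inv \<sigma> j \<and> inv \<sigma> j < m+n then (map (\<lambda>i. vs ! \<sigma> i) [m..<m+n])[inv \<sigma> j - m := x]
     else map (\<lambda>i. vs ! \<sigma> i) [m..<m+n])"
proof -
  have s: "\<sigma> i < N" if "i < N" for i using assms(1) that by (meson lessThan_iff permutes_in_image)
  have e: "\<sigma> i = j \<longleftrightarrow> i = inv \<sigma> j" for i using assms(1)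
    by (metis permutes_inverses(1) permutes_inverses(2))
  show ?thesis
  proof (rule nth_equalityI)
    fix i assume i: "i < length (map (\<lambda>i. vs[j:=x] ! \<sigma> i) [m..<m+n])"
    then have i': "i < n" by simp
    have L: "map (\<lambda>i. vs[j:=x] ! \<sigma> i) [m..<m+n] ! i = (if m + i = inv \<sigma> j then x else vs ! \<sigma> (m+i))"
      using i' assms s e[of "m+i"] by (auto simp: nth_list_update permutes_inverses[OF assms(1)])
    show "map (\<lambda>i. vs[j:=x] ! \<sigma> i) [m..<m+n] ! i = (if m \<le> inv \<sigma> j \<and> inv \<sigma> j < m+n then (map (\<lambda>i. vs ! \<sigma> i) [m..<m+n])[inv \<sigma> j - m := x]
     else map (\<lambda>i. vs ! \<sigma> i) [m..<m+n]) ! i"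
      unfolding L using i' by (auto simp: nth_list_update permutes_inverses[OF assms(1)])
  qed simp
qed

lemma wedge_ml:
  assumes "ml k \<alpha>" "ml l \<beta>"
  shows "ml (k+l) (wedge k l \<alpha> \<beta>)"
  unfolding ml_def
proof (intro allI impI)
  fix vs :: "'a list" and j a b u w
  assume len: "length vs = k + l" and j: "j < k + l"
  let ?S = "{\<sigma>. \<sigma> permutes {..<k+l}}"
  let ?T = "\<lambda>x \<sigma>. of_int (sign \<sigma>) * \<alpha> (map (\<lambda>i. vs[j:=x] ! \<sigma> i) [0..<k])
                      * \<beta> (map (\<lambda>i. vs[j:=x] ! \<sigma> i) [k..<k+l])"
  have trm: "?T (a *\<^sub>R u + b *\<^sub>R w) \<sigma> = a * ?T u \<sigma> + b * ?T w \<sigma>" if s: "\<sigma> permutes {..<k+l}" for \<sigma>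
  proof -
    have i: "inv \<sigma> j < k + l" using s j
      by (meson lessThan_iff permutes_in_image permutes_inv)
    have m1: "map (\<lambda>i. vs[j:=x] ! \<sigma> i) [0..<k] =
      (if inv \<sigma> j < k then (map (\<lambda>i. vs ! \<sigma> i) [0..<k])[inv \<sigma> j := x]
       else map (\<lambda>i. vs ! \<sigma> i) [0..<k])" for x
      using map_upd_perm[OF s len j, of 0 k x] by simp
    have m2: "map (\<lambda>i. vs[j:=x] ! \<sigma> i) [k..<k+l] =
      (if k \<le> inv \<sigma> j then (map (\<lambda>i. vs ! \<sigma> i) [k..<k+l])[inv \<sigma> j - k := x]
       else map (\<lambda>i. vs ! \<sigma> i) [k..<k+l])" for x
      using map_upd_perm[OF s len j, of k l x] i by simp
    show ?thesis
    proof (cases "inv \<sigma> j < k")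
      case True
      then show ?thesis unfolding m1 m2 using assms(1) i unfolding ml_def
        by (simp add: algebra_simps)
    next
      case False
      then show ?thesis unfolding m1 m2 using assms(2) i unfolding ml_def
        by (simp add: algebra_simps)
    qed
  qed
  show "wedge k l \<alpha> \<beta> (vs[j := a *\<^sub>R u + b *\<^sub>R w]) =
       a * wedge k l \<alpha> \<beta> (vs[j := u]) + b * wedge k l \<alpha> \<beta> (vs[j := w])"
  proof -
    have "(\<Sum>\<sigma>\<in>?S. ?T (a *\<^sub>R u + b *\<^sub>R w) \<sigma>) = (\<Sum>\<sigma>\<in>?S. a * ?T u \<sigma> + b * ?T w \<sigma>)"
      by (rule sum.cong) (auto simp: trm)
    also have "\<dots> = a * (\<Sum>\<sigma>\<in>?S. ?T u \<sigma>) + b * (\<Sum>\<sigma>\<in>?S. ?T w \<sigma>)"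
      by (simp add: sum.distrib sum_distrib_left)
    finally show ?thesis unfolding wedge_def by (simp add: add_divide_distrib)
  qed
qed

lemma wedge_alt: "alt (k+l) (wedge k l \<alpha> \<beta>)"
  unfolding alt_def
proof (intro allI impI)
  fix vs :: "'a list" and i j
  assume len: "length vs = k + l" and ij: "i < k + l" "j < k + l" "i \<noteq> j" and eq: "vs ! i = vs ! j"
  let ?S = "{\<sigma>. \<sigma> permutes {..<k+l}}"
  let ?T = "\<lambda>\<sigma>. of_int (sign \<sigma>) * \<alpha> (map (\<lambda>i. vs ! \<sigma> i) [0..<k])
                      * \<beta> (map (\<lambda>i. vs ! \<sigma> i) [k..<k+l])"
  define \<tau> where "\<tau> = Transposition.transpose i j"
  have tp: "\<tau> permutes {..<k+l}" unfolding \<tau>_def using ij by (simp add: permutes_swap_id)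
  have vt: "vs ! \<tau> m = vs ! m" for m unfolding \<tau>_def using eq by (cases "m = i"; cases "m = j") auto
  have tt: "\<tau> \<circ> (\<tau> \<circ> \<sigma>) = \<sigma>" for \<sigma> unfolding \<tau>_def by (simp add: fun_eq_iff)
  have bij: "bij_betw (\<lambda>\<sigma>. \<tau> \<circ> \<sigma>) ?S ?S"
    by (rule bij_betwI[where g = "\<lambda>\<sigma>. \<tau> \<circ> \<sigma>"]) (auto simp: tt permutes_compose[OF _ tp])
  have neg: "?T (\<tau> \<circ> \<sigma>) = - ?T \<sigma>" if "\<sigma> \<in> ?S" for \<sigma>
  proof -
    have "permutation \<sigma>" "permutation \<tau>" using that tp permutation_permutes by auto
    then have "sign (\<tau> \<circ> \<sigma>) = - sign \<sigma>" using ij unfolding \<tau>_def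
      by (simp add: sign_compose sign_swap_id)
    then show ?thesis by (simp add: vt)
  qed
  have "sum ?T ?S = sum (?T \<circ> (\<lambda>\<sigma>. \<tau> \<circ> \<sigma>)) ?S"
    using sum.reindex_bij_betw[OF bij, of ?T] by simp
  also have "\<dots> = sum (\<lambda>\<sigma>. - ?T \<sigma>) ?S"
  proof (rule sum.cong[OF refl])
    fix \<sigma> assume "\<sigma> \<in> ?S"
    then show "(?T \<circ> (\<lambda>\<sigma>. \<tau> \<circ> \<sigma>)) \<sigma> = - ?T \<sigma>" using neg[of \<sigma>] by (simp only: comp_apply)
  qed
  also have "\<dots> = - sum ?T ?S" by (simp add: sum_negf)
  finally have "sum ?T ?S = 0" by simp
  then show "wedge k l \<alpha> \<beta> vs = 0" unfolding wedge_def by simp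
qed

lemma wedge_vanish:
  assumes "\<forall>vs. length vs = k \<longrightarrow> h \<in> set vs \<longrightarrow> \<alpha> vs = 0"
    and "\<forall>vs. length vs = l \<longrightarrow> h \<in> set vs \<longrightarrow> \<beta> vs = 0"
    and "length vs = k + l" "h \<in> set vs"
  shows "wedge k l \<alpha> \<beta> vs = 0"
proof -
  obtain j where j: "j < k + l" "vs ! j = h" using assms(3,4) by (metis in_set_conv_nth)
  have "of_int (sign \<sigma>) * \<alpha> (map (\<lambda>i. vs ! \<sigma> i) [0..<k])
                      * \<beta> (map (\<lambda>i. vs ! \<sigma> i) [k..<k+l]) = 0" if s: "\<sigma> permutes {..<k+l}" for \<sigma>
  proof -
    have i: "inv \<sigma> j < k + l" using s j
      by (meson lessThan_iff permutes_in_image permutes_inv)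
    have si: "\<sigma> (inv \<sigma> j) = j" using permutes_inverses[OF s] by simp
    show ?thesis
    proof (cases "inv \<sigma> j < k")
      case True
      then have "h \<in> set (map (\<lambda>i. vs ! \<sigma> i) [0..<k])" using si j
        by (auto simp: image_iff intro!: bexI[of _ "inv \<sigma> j"])
      then show ?thesis using assms(1) by simp
    next
      case False
      then have "h \<in> set (map (\<lambda>i. vs ! \<sigma> i) [k..<k+l])" using si j i
        by (auto simp: image_iff intro!: bexI[of _ "inv \<sigma> j"])
      then show ?thesis using assms(2) by simp
    qed
  qed
  then show ?thesis unfolding wedge_def by (simp add: sum.neutral)
qed

lemma wedge_pow2_ml: "ml 2 \<eta> \<Longrightarrow> ml (2*n) (wedge_pow2 n \<eta>)"
proof (induction n)
  case 0
  then show ?case by (simp add: ml_def)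
next
  case (Suc n)
  then show ?case using wedge_ml[of 2 \<eta> "2*n" "wedge_pow2 n \<eta>"] by simp
qed

lemma wedge_pow2_vanish:
  assumes "\<forall>vs. length vs = 2 \<longrightarrow> h \<in> set vs \<longrightarrow> \<eta> vs = 0"
  shows "\<forall>vs. length vs = 2*n \<longrightarrow> h \<in> set vs \<longrightarrow> wedge_pow2 n \<eta> vs = 0"
proof (induction n)
  case 0
  then show ?case by simp
next
  case (Suc n)
  show ?case using wedge_vanish[OF assms Suc] by simp
qed

lemma key_vanish:
  fixes F :: "'a::euclidean_space list \<Rightarrow> real"
  assumes ml: "ml N F" and alt: "alt N F" and N: "N = DIM('a)"
    and len: "length vs = N" and Fv: "F vs \<noteq> 0" and h: "h \<noteq> 0"
    and van: "\<forall>vs. length vs = N \<longrightarrow> h \<in> set vs \<longrightarrow> F vs = 0"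
  shows False
proof -
  define G where "G j x = F (vs[j:=x])" for j x
  have linG: "linear (G j)" if "j < N" for j
  proof (rule linearI)
    fix x y show "G j (x + y) = G j x + G j y"
      using ml[unfolded ml_def, rule_format, OF len that, of 1 x 1 y] unfolding G_def by simp
  next
    fix c x show "G j (c *\<^sub>R x) = c *\<^sub>R G j x"
      using ml[unfolded ml_def, rule_format, OF len that, of c x 0 x] unfolding G_def by simp
  qed
  have Gjj: "G j (vs ! j) = F vs" for j unfolding G_def by simp
  have G0: "G j v = 0" if jv: "j < N" "v \<in> set vs" "v \<noteq> vs ! j" for j v
  proof -
    obtain i where i: "i < N" "vs ! i = v" using jv(2) len by (auto simp: in_set_conv_nth)
    have "i \<noteq> j" using i(2) jv(3) by auto
    then show ?thesis using alt[unfolded alt_def, rule_format, of "vs[j:=v]" i j] len i jv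
      unfolding G_def by simp
  qed
  have Gsum: "G j (\<Sum>v\<in>set vs. u v *\<^sub>R v) = u (vs ! j) * F vs" if j: "j < N" "distinct vs" for j u
  proof -
    have m: "vs ! j \<in> set vs" using j len by simp
    have "G j (\<Sum>v\<in>set vs. u v *\<^sub>R v) = (\<Sum>v\<in>set vs. u v * G j v)"
      using linG[OF j(1)] by (simp add: linear_sum linear_scale)
    also have "\<dots> = u (vs ! j) * G j (vs ! j) + (\<Sum>v\<in>set vs - {vs ! j}. u v * G j v)"
      using m by (simp add: sum.remove)
    also have "(\<Sum>v\<in>set vs - {vs ! j}. u v * G j v) = 0"
      using G0[OF j(1)] by (intro sum.neutral) auto
    finally show ?thesis by (simp add: Gjj)
  qed
  have dist: "distinct vs"
  proof (rule ccontr)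
    assume "\<not> distinct vs"
    then obtain i j where "i < N" "j < N" "i \<noteq> j" "vs ! i = vs ! j"
      using len by (auto simp: distinct_conv_nth)
    then show False using alt len Fv unfolding alt_def by blast
  qed
  have ind: "independent (set vs)"
  proof (rule ccontr)
    assume "\<not> independent (set vs)"
    then obtain a where a: "a \<in> set vs" "a \<in> span (set vs - {a})" unfolding dependent_def by blast
    obtain j where j: "j < N" "vs ! j = a" using a(1) len by (auto simp: in_set_conv_nth)
    define S where "S = set vs - {a}"
    have fS: "finite S" unfolding S_def by simp
    obtain u where u: "a = (\<Sum>v\<in>S. u v *\<^sub>R v)"
      using a(2) span_finite[OF fS] unfolding S_def[symmetric] by auto
    have "G j a = G j (\<Sum>v\<in>S. u v *\<^sub>R v)" using u by simp
    also have "\<dots> = (\<Sum>v\<in>S. u v * G j v)"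
      using linG[OF j(1)] by (simp add: linear_sum linear_scale)
    also have "\<dots> = 0" using G0[OF j(1)] j unfolding S_def by (intro sum.neutral) auto
    finally show False using Gjj[of j] j Fv by simp
  qed
  have card: "card (set vs) = DIM('a)" using dist len N by (simp add: distinct_card)
  have "UNIV \<subseteq> span (set vs)"
    by (rule card_ge_dim_independent) (use ind card in \<open>simp_all add: dim_UNIV\<close>)
  then obtain u where u: "h = (\<Sum>v\<in>set vs. u v *\<^sub>R v)"
    using span_finite[of "set vs"] by auto
  have "u (vs ! j) = 0" if "j < N" for j
  proof -
    have "G j h = 0" unfolding G_def using van len that by (simp add: set_update_memI)
    then show ?thesis using Gsum[OF that dist, of u] u Fv by simp
  qed
  then have "h = 0" unfolding u using len by (intro sum.neutral) (auto simp: in_set_conv_nth)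
  then show False using h by simp
qed

context
  fixes br :: "'g::euclidean_space \<Rightarrow> 'g \<Rightarrow> 'g" and \<omega> :: "'g \<Rightarrow> real" and z :: 'g
  assumes la: "lie_algebra br" and lw: "linear \<omega>" and z0: "z \<noteq> 0"
    and cz: "\<And>x. br z x = 0"
    and rad: "\<And>h. (\<forall>x. \<omega> (br h x) = 0) \<Longrightarrow> \<exists>c. h = c *\<^sub>R z"
begin

lemma czR: "br x z = 0" using br_anti[OF la, of z x] cz by simp

lemmas ws = linear_add[OF lw] linear_scale[OF lw] linear_diff[OF lw] linear_neg[OF lw] linear_0[OF lw]
lemmas bs = br_simps[OF la]

lemma uniq: assumes "a \<bullet> z = 0" "\<forall>w. \<omega> (br a w) = 0" shows "a = 0"
proof -
  obtain c where c: "a = c *\<^sub>R z" using rad assms(2) by blast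
  then have "c * (z \<bullet> z) = 0" using assms(1) by simp
  then have "c = 0" using z0 by simp
  then show ?thesis using c by simp
qed

lemma exist:
  assumes lc: "linear c" and cz0: "c z = 0"
  shows "\<exists>a. a \<bullet> z = 0 \<and> (\<forall>w. \<omega> (br a w) = c w)"
proof -
  define M where "M a = (\<Sum>b\<in>Basis. \<omega> (br a b) *\<^sub>R b)" for a
  have lB: "linear (\<lambda>w. \<omega> (br a w))" for a
    using linear_compose[OF linR[OF la] lw] by (simp add: o_def)
  have Mw: "M a \<bullet> w = \<omega> (br a w)" for a w
  proof -
    have "\<omega> (br a w) = \<omega> (br a (\<Sum>b\<in>Basis. (w \<bullet> b) *\<^sub>R b))" by (simp add: euclidean_representation)
    also have "\<dots> = (\<Sum>b\<in>Basis. (w \<bullet> b) * \<omega> (br a b))"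
      by (simp add: br_sumR[OF la] linear_sum[OF lw] bs ws)
    finally show ?thesis unfolding M_def by (simp add: inner_sum_left inner_commute[of w] mult.commute)
  qed
  define M' where "M' a = M a + (a \<bullet> z) *\<^sub>R z" for a
  have linM': "linear M'"
  proof (rule linearI)
    fix x y show "M' (x + y) = M' x + M' y"
      unfolding M'_def M_def by (simp add: bs ws algebra_simps scaleR_add_left sum.distrib inner_add_left)
  next
    fix r x show "M' (r *\<^sub>R x) = r *\<^sub>R M' x"
      unfolding M'_def M_def by (simp add: bs ws algebra_simps scaleR_sum_right)
  qed
  have Mz: "M a \<bullet> z = 0" for a using Mw czR ws by simp
  have zz: "z \<bullet> z \<noteq> 0" using z0 by simp
  have "inj M'"
    unfolding linear_injective_0[OF linM']
  proof (intro allI impI)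
    fix a assume "M' a = 0"
    then have e: "M a + (a \<bullet> z) *\<^sub>R z = 0" unfolding M'_def .
    then have "(M a + (a \<bullet> z) *\<^sub>R z) \<bullet> z = 0" by simp
    then have az: "a \<bullet> z = 0" using Mz zz by (simp add: inner_add_left)
    then have "M a = 0" using e by simp
    then have "\<forall>w. \<omega> (br a w) = 0" using Mw by (metis inner_zero_left)
    then show "a = 0" using uniq az by blast
  qed
  then have "surj M'" using linM' linear_inj_imp_surj by blast
  define t where "t = (\<Sum>b\<in>Basis. c b *\<^sub>R b)"
  have tw: "t \<bullet> w = c w" for w
  proof -
    have "c w = c (\<Sum>b\<in>Basis. (w \<bullet> b) *\<^sub>R b)" by (simp add: euclidean_representation)
    also have "\<dots> = (\<Sum>b\<in>Basis. (w \<bullet> b) * c b)"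
      using lc by (simp add: linear_sum linear_scale)
    finally show ?thesis unfolding t_def by (simp add: inner_sum_left inner_commute[of w] mult.commute)
  qed
  obtain a where a: "M' a = t" using \<open>surj M'\<close> by (metis surjD)
  then have "(M a + (a \<bullet> z) *\<^sub>R z) \<bullet> z = t \<bullet> z" unfolding M'_def by simp
  then have az: "a \<bullet> z = 0" using Mz zz tw[of z] cz0 by (simp add: inner_add_left)
  then have "M a = t" using a unfolding M'_def by simp
  then show ?thesis using az Mw tw by metis
qed

definition nab :: "'g \<Rightarrow> 'g \<Rightarrow> 'g" where
  "nab x y = (SOME a. a \<bullet> z = 0 \<and> (\<forall>w. \<omega> (br a w) = - \<omega> (br y (br x w))))"

lemma nab_spec: "nab x y \<bullet> z = 0 \<and> (\<forall>w. \<omega> (br (nab x y) w) = - \<omega> (br y (br x w)))"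
proof -
  have h1: "linear (\<lambda>w. - \<omega> (br y (br x w)))"
    by (intro linearI) (simp_all add: bs ws)
  have h2: "- \<omega> (br y (br x z)) = 0" by (simp add: czR bs ws)
  show ?thesis using exist[OF h1 h2] unfolding nab_def by (rule someI_ex)
qed

lemma nabz: "nab x y \<bullet> z = 0" using nab_spec by blast
lemma nabw: "\<omega> (br (nab x y) w) = - \<omega> (br y (br x w))" using nab_spec by blast

lemma eqI: assumes "a \<bullet> z = 0" "b \<bullet> z = 0" "\<And>w. \<omega> (br a w) = \<omega> (br b w)" shows "a = b"
proof -
  have "a - b = 0" using assms by (intro uniq) (simp_all add: inner_diff_left bs ws)
  then show ?thesis by simp
qed


definition pi :: "'g \<Rightarrow> 'g" where "pi x = x - ((x \<bullet> z) / (z \<bullet> z)) *\<^sub>R z"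

lemma zz: "z \<bullet> z \<noteq> 0" using z0 by simp
lemma pi_z: "pi x \<bullet> z = 0" unfolding pi_def using zz by (simp add: inner_diff_left)
lemma pi_id: "x \<bullet> z = 0 \<Longrightarrow> pi x = x" unfolding pi_def by simp
lemma br_piR: "br x (pi u) = br x u" unfolding pi_def by (simp add: bs czR)
lemma br_piL: "br (pi u) x = br u x" unfolding pi_def by (simp add: bs cz)
lemma lin_pi: "linear pi"
  by (rule linearI) (simp_all add: pi_def inner_add_left algebra_simps add_divide_distrib scaleR_add_left)
lemma pi_add: "pi (x + y) = pi x + pi y" using linear_add[OF lin_pi] .
lemma pi_scale: "pi (c *\<^sub>R x) = c *\<^sub>R pi x" using linear_scale[OF lin_pi] .
lemma pi_0: "pi 0 = 0" using linear_0[OF lin_pi] .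
lemma pi_ker: "pi x = 0 \<longleftrightarrow> x \<in> span {z}"
proof
  assume "pi x = 0"
  then have "x = ((x \<bullet> z) / (z \<bullet> z)) *\<^sub>R z" unfolding pi_def by simp
  then show "x \<in> span {z}" by (metis span_base span_scale singletonI)
next
  assume "x \<in> span {z}"
  then obtain c where "x = c *\<^sub>R z" by (auto simp: span_singleton)
  then show "pi x = 0" unfolding pi_def using zz by simp
qed

lemma nab_addL: "nab (a *\<^sub>R x + b *\<^sub>R y) w = a *\<^sub>R nab x w + b *\<^sub>R nab y w"
  by (rule eqI) (simp_all add: nabz nabw inner_add_left bs ws algebra_simps)
lemma nab_addR: "nab w (a *\<^sub>R x + b *\<^sub>R y) = a *\<^sub>R nab w x + b *\<^sub>R nab w y"
  by (rule eqI) (simp_all add: nabz nabw inner_add_left bs ws algebra_simps)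
lemma torsion: "nab x y - nab y x = pi (br x y)"
proof (rule eqI)
  show "(nab x y - nab y x) \<bullet> z = 0" by (simp add: nabz inner_diff_left)
  show "pi (br x y) \<bullet> z = 0" by (rule pi_z)
  fix t
  have j: "br (br x y) t = br x (br y t) - br y (br x t)" using jac2[OF la] by simp
  show "\<omega> (br (nab x y - nab y x) t) = \<omega> (br (pi (br x y)) t)"
    unfolding br_piL j by (simp add: bs ws nabw)
qed
lemma flat: "nab x (nab y w) - nab y (nab x w) = nab (pi (br x y)) w"
proof (rule eqI)
  show "(nab x (nab y w) - nab y (nab x w)) \<bullet> z = 0" by (simp add: nabz inner_diff_left)
  show "nab (pi (br x y)) w \<bullet> z = 0" by (rule nabz)
  fix t
  have j: "br (br x y) t = br x (br y t) - br y (br x t)" using jac2[OF la] by simp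
  show "\<omega> (br (nab x (nab y w) - nab y (nab x w)) t) = \<omega> (br (nab (pi (br x y)) w) t)"
    by (simp add: bs ws nabw br_piL j)
qed

end


lemma ml_one: "linear \<omega> \<Longrightarrow> ml 1 (one_form \<omega>)"
  unfolding ml_def one_form_def by (auto simp: linear_add linear_scale)

lemma ml_d: assumes "lie_algebra br" "linear \<omega>" shows "ml 2 (d_form br \<omega>)"
  unfolding ml_def d_form_def
proof (intro allI impI)
  fix vs :: "'a list" and j :: nat and a b u w
  assume l: "length vs = 2" and j: "j < 2"
  obtain x y where xy: "vs = [x, y]" using l by (auto simp: length_Suc_conv numeral_2_eq_2)
  note r = br_simps[OF assms(1)] linear_add[OF assms(2)] linear_scale[OF assms(2)]
  have "j = 0 \<or> j = 1" using j by auto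
  then show "- \<omega> (br (vs[j := a *\<^sub>R u + b *\<^sub>R w] ! 0) (vs[j := a *\<^sub>R u + b *\<^sub>R w] ! 1)) =
       a * - \<omega> (br (vs[j := u] ! 0) (vs[j := u] ! 1)) + b * - \<omega> (br (vs[j := w] ! 0) (vs[j := w] ! 1))"
  proof
    assume "j = 0" then show ?thesis unfolding xy by (simp add: r)
  next
    assume "j = 1" then show ?thesis unfolding xy by (simp add: r)
  qed
qed

theorem mainTheorem2:
  fixes br :: "'g::euclidean_space \<Rightarrow> 'g \<Rightarrow> 'g" and p :: nat and \<omega> :: "'g \<Rightarrow> real"
  assumes "lie_algebra br"
    and "nilpotent_lie br"
    and "DIM('g) = 2*p+1"
    and "contact_form br p \<omega>"
  shows "\<exists>(V::'g set) (H::'g set) brh (\<pi>::'g \<Rightarrow> 'g) nab.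
           subspace V \<and> dim V = 1 \<and> (\<forall>v\<in>V. \<forall>x. br v x = 0) \<and>
           lie_algebra_on H brh \<and>
           linear \<pi> \<and> range \<pi> = H \<and> {x. \<pi> x = 0} = V \<and>
           (\<forall>x y. \<pi> (br x y) = brh (\<pi> x) (\<pi> y)) \<and>
           affine_structure_on H brh nab"
proof -
  note la = assms(1)
  note bs = br_simps[OF la]
  obtain k where k: "lcs br k = {0}" using assms(2) unfolding nilpotent_lie_def by blast
  define k0 where "k0 = (LEAST k. lcs br k = {0})"
  have k0: "lcs br k0 = {0}" unfolding k0_def using k by (rule LeastI)
  obtain b :: 'g where b: "b \<in> Basis" using nonempty_Basis by (meson ex_in_conv)
  have b0: "b \<noteq> 0" using b by (rule nonzero_Basis)
  have "lcs br 0 \<noteq> {0}"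
  proof
    assume "lcs br 0 = {0}"
    then have "b \<in> {0}" by (metis UNIV_I lcs.simps(1))
    then show False using b0 by simp
  qed
  then have "k0 \<noteq> 0" using k0 by metis
  then obtain m where m: "k0 = Suc m" using not0_implies_Suc by blast
  have "m < k0" using m by simp
  then have "\<not> lcs br m = {0}" unfolding k0_def by (rule not_less_Least)
  moreover have "0 \<in> lcs br m"
  proof (cases m)
    case 0 then show ?thesis by simp
  next
    case (Suc n) then show ?thesis by (simp add: span_zero)
  qed
  ultimately obtain z where z: "z \<in> lcs br m" "z \<noteq> 0" by blast
  have czR: "br x z = 0" for x
  proof -
    have "br x z \<in> lcs br (Suc m)" using z(1) by (auto intro!: span_base)
    then show ?thesis using k0 m by simp
  qed
  have cz: "br z x = 0" for x using br_anti[OF la, of z x] czR[of x] by simp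
  obtain vs where lw: "linear \<omega>" and len: "length vs = 1 + 2*p"
    and Fv: "wedge 1 (2*p) (one_form \<omega>) (wedge_pow2 p (d_form br \<omega>)) vs \<noteq> 0"
    using assms(4) unfolding contact_form_def by auto
  note ws = linear_add[OF lw] linear_scale[OF lw] linear_diff[OF lw] linear_neg[OF lw] linear_0[OF lw]
  have mlF: "ml (1 + 2*p) (wedge 1 (2*p) (one_form \<omega>) (wedge_pow2 p (d_form br \<omega>)))"
    by (rule wedge_ml[OF ml_one[OF lw] wedge_pow2_ml[OF ml_d[OF la lw]]])
  have nondeg: False if h: "h \<noteq> 0" "\<omega> h = 0" "\<forall>x. \<omega> (br h x) = 0" for h
  proof -
    have a1: "\<forall>vs. length vs = 1 \<longrightarrow> h \<in> set vs \<longrightarrow> one_form \<omega> vs = 0"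
      using h by (auto simp: one_form_def length_Suc_conv)
    have e2: "\<forall>vs. length vs = 2 \<longrightarrow> h \<in> set vs \<longrightarrow> d_form br \<omega> vs = 0"
    proof (intro allI impI)
      fix vs :: "'g list" assume "length vs = 2" "h \<in> set vs"
      then obtain x y where xy: "vs = [x, y]" "h = x \<or> h = y" by (auto simp: length_Suc_conv numeral_2_eq_2)
      have brh0: "\<omega> (br u h) = 0" for u using br_anti[OF la, of u h] h(3) ws by simp
      from xy(2) show "d_form br \<omega> vs = 0"
      proof
        assume "h = x" then show ?thesis using xy(1) h(3) by (simp add: d_form_def)
      next
        assume "h = y" then show ?thesis using xy(1) brh0 by (simp add: d_form_def)
      qed
    qed
    show False
      using key_vanish[OF mlF wedge_alt _ len Fv h(1)] assms(3)
        wedge_vanish[OF a1 wedge_pow2_vanish[OF e2]] by simp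
  qed
  have wz: "\<omega> z \<noteq> 0" using nondeg[of z] z(2) cz ws by auto
  have rad: "\<exists>c. h = c *\<^sub>R z" if hh: "\<forall>x. \<omega> (br h x) = 0" for h
  proof -
    define h' where "h' = h - (\<omega> h / \<omega> z) *\<^sub>R z"
    have "\<omega> h' = 0" unfolding h'_def using wz by (simp add: ws)
    moreover have "\<forall>x. \<omega> (br h' x) = 0" unfolding h'_def using hh by (simp add: bs cz ws)
    ultimately have "h' = 0" using nondeg by blast
    then show ?thesis unfolding h'_def by (metis eq_iff_diff_eq_0)
  qed
  note P = la lw z(2) cz rad
  let ?pi = "pi z"
  let ?V = "span {z}"
  let ?H = "{x::'g. x \<bullet> z = 0}"
  let ?brh = "\<lambda>x y. ?pi (br x y)"
  let ?nab = "nab br \<omega> z"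
  have pz: "?pi x \<bullet> z = 0" for x using pi_z[OF P] .
  have pid: "x \<bullet> z = 0 \<Longrightarrow> ?pi x = x" for x using pi_id[OF P] .
  have bpR: "br x (?pi u) = br x u" for x u using br_piR[OF P] .
  have bpL: "br (?pi u) x = br u x" for x u using br_piL[OF P] .
  note pis = pi_add[OF P] pi_scale[OF P] pi_0[OF P]
  have "subspace ?V" by (rule subspace_span)
  moreover have "dim ?V = 1" using z(2) by simp
  moreover have "\<forall>v\<in>?V. \<forall>x. br v x = 0" by (auto simp: span_singleton bs cz)
  moreover have "lie_algebra_on ?H ?brh"
    unfolding lie_algebra_on_def
  proof (intro conjI ballI allI)
    show "subspace ?H" by (rule subspace_hyperplane2)
    fix x y w assume "x \<in> ?H" "y \<in> ?H" "w \<in> ?H"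
    show "?brh x y \<in> ?H" using pz by simp
    fix a b
    show "?brh (a *\<^sub>R x + b *\<^sub>R y) w = a *\<^sub>R ?brh x w + b *\<^sub>R ?brh y w" by (simp add: bs pis)
    show "?brh w (a *\<^sub>R x + b *\<^sub>R y) = a *\<^sub>R ?brh w x + b *\<^sub>R ?brh w y" by (simp add: bs pis)
  next
    fix x assume "x \<in> ?H" show "?brh x x = 0" by (simp add: br_self[OF la] pis)
  next
    fix x y w assume "x \<in> ?H" "y \<in> ?H" "w \<in> ?H"
    have "?pi (br x (br y w) + br y (br w x) + br w (br x y)) = 0" by (simp add: jac[OF la] pis)
    then show "?brh x (?brh y w) + ?brh y (?brh w x) + ?brh w (?brh x y) = 0"
      by (simp add: bpR pis)
  qed
  moreover have "linear ?pi" using lin_pi[OF P] .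
  moreover have "range ?pi = ?H"
  proof
    show "range ?pi \<subseteq> ?H" using pz by auto
    show "?H \<subseteq> range ?pi"
    proof
      fix x assume "x \<in> ?H"
      then have "?pi x = x" using pid by simp
      then show "x \<in> range ?pi" by (metis rangeI)
    qed
  qed
  moreover have "{x. ?pi x = 0} = ?V" using pi_ker[OF P] by auto
  moreover have "\<forall>x y. ?pi (br x y) = ?brh (?pi x) (?pi y)" by (simp add: bpR bpL)
  moreover have "affine_structure_on ?H ?brh ?nab"
    unfolding affine_structure_on_def
    using nabz[OF P] nab_addL[OF P] nab_addR[OF P] torsion[OF P] flat[OF P] by simp
  ultimately show ?thesis by blast
qed

end
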